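(* Let $(\mathfrak J,B)$ be a pseudo-euclidean Jordan algebra and $\omega$ a bilinear form on $\mathfrak J$. Then $\omega$ is a symplectic form on $\mathfrak J$ if and only if there exists an invertible $B$-antisymmetric derivation $D$ of $\mathfrak J$ such that $\omega(x,y)=B(D(x),y)$ for all $x,y\in\mathfrak J$. In particular $\mathfrak J$ admits a symplectic form iff it admits an invertible $B$-antisymmetric derivation.
   Context: All algebras are finite-dimensional over a field of characteristic zero. A Jordan algebra is a commutative algebra with $x(yx^2)=(xy)x^2$; $(\mathfrak J,B)$ is pseudo-euclidean if $B$ is nondegenerate, symmetric, with $B(xy,z)=B(x,yz)$. A symplectic form on $\mathfrak J$ is a nondegenerate skew-symmetric bilinear form $\omega$ with $\omega(xy,z)+\omega(yz,x)+\omega(zx,y)=0$ for all $x,y,z$. $D$ is $B$-antisymmetric if $B(Dx,y)=-B(x,Dy)$; a derivation satisfies $D(xy)=D(x)y+xD(y)$. *)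

theory Defs
  imports Main "HOL.Vector_Spaces"
begin

definition lin_map :: "('k::field \<Rightarrow> 'v::ab_group_add \<Rightarrow> 'v) \<Rightarrow> ('v \<Rightarrow> 'v) \<Rightarrow> bool" where
  "lin_map sc f \<longleftrightarrow> Vector_Spaces.linear sc sc f"

definition bilin_form :: "('k::field \<Rightarrow> 'v::ab_group_add \<Rightarrow> 'v) \<Rightarrow> ('v \<Rightarrow> 'v \<Rightarrow> 'k) \<Rightarrow> bool" where
  "bilin_form sc F \<longleftrightarrow> (\<forall>x. Vector_Spaces.linear sc (*) (F x)) \<and> (\<forall>y. Vector_Spaces.linear sc (*) (\<lambda>x. F x y))"

definition fd_algebra :: "('k::field \<Rightarrow> 'v::ab_group_add \<Rightarrow> 'v) \<Rightarrow> ('v \<Rightarrow> 'v \<Rightarrow> 'v) \<Rightarrow> bool" where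
  "fd_algebra sc mul \<longleftrightarrow> vector_space sc
     \<and> (\<exists>S. finite S \<and> module.span sc S = UNIV)
     \<and> (\<forall>x. lin_map sc (mul x)) \<and> (\<forall>y. lin_map sc (\<lambda>x. mul x y))"

definition jordan_algebra :: "('k::field \<Rightarrow> 'v::ab_group_add \<Rightarrow> 'v) \<Rightarrow> ('v \<Rightarrow> 'v \<Rightarrow> 'v) \<Rightarrow> bool" where
  "jordan_algebra sc mul \<longleftrightarrow> fd_algebra sc mul
     \<and> (\<forall>x y. mul x y = mul y x)
     \<and> (\<forall>x y. mul x (mul y (mul x x)) = mul (mul x y) (mul x x))"

definition pseudo_euclidean :: "('k::field \<Rightarrow> 'v::ab_group_add \<Rightarrow> 'v) \<Rightarrow> ('v \<Rightarrow> 'v \<Rightarrow> 'v) \<Rightarrow> ('v \<Rightarrow> 'v \<Rightarrow> 'k) \<Rightarrow> bool" where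
  "pseudo_euclidean sc mul B \<longleftrightarrow> jordan_algebra sc mul \<and> bilin_form sc B
     \<and> (\<forall>x y. B x y = B y x)
     \<and> (\<forall>x. (\<forall>y. B x y = 0) \<longrightarrow> x = 0)
     \<and> (\<forall>x y z. B (mul x y) z = B x (mul y z))"

definition symplectic_form :: "('k::field \<Rightarrow> 'v::ab_group_add \<Rightarrow> 'v) \<Rightarrow> ('v \<Rightarrow> 'v \<Rightarrow> 'v) \<Rightarrow> ('v \<Rightarrow> 'v \<Rightarrow> 'k) \<Rightarrow> bool" where
  "symplectic_form sc mul \<omega> \<longleftrightarrow> bilin_form sc \<omega>
     \<and> (\<forall>x y. \<omega> x y = - \<omega> y x)
     \<and> (\<forall>x. (\<forall>y. \<omega> x y = 0) \<longrightarrow> x = 0)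
     \<and> (\<forall>x y z. \<omega> (mul x y) z + \<omega> (mul y z) x + \<omega> (mul z x) y = 0)"

definition derivation :: "('k::field \<Rightarrow> 'v::ab_group_add \<Rightarrow> 'v) \<Rightarrow> ('v \<Rightarrow> 'v \<Rightarrow> 'v) \<Rightarrow> ('v \<Rightarrow> 'v) \<Rightarrow> bool" where
  "derivation sc mul D \<longleftrightarrow> lin_map sc D \<and> (\<forall>x y. D (mul x y) = mul (D x) y + mul x (D y))"

definition B_antisymmetric :: "('v \<Rightarrow> 'v \<Rightarrow> 'k::field) \<Rightarrow> ('v \<Rightarrow> 'v) \<Rightarrow> bool" where
  "B_antisymmetric B D \<longleftrightarrow> (\<forall>x y. B (D x) y = - B x (D y))"

end

theory Submission
  imports Defs
begin


lemma riesz: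
  fixes sc :: "'k::field \<Rightarrow> 'v::ab_group_add \<Rightarrow> 'v"
  assumes vs: "vector_space sc" and finS: "finite S" and spS: "module.span sc S = UNIV"
  and F1: "\<And>x. Vector_Spaces.linear sc (*) (F x)"
  and F2: "\<And>y. Vector_Spaces.linear sc (*) (\<lambda>x. F x y)"
  and nd: "\<And>x. (\<forall>y. F x y = 0) \<Longrightarrow> x = 0"
  and f: "Vector_Spaces.linear sc (*) f"
  shows "\<exists>a. \<forall>y. F a y = f y"
proof -
  interpret vector_space sc by fact
  have vsk: "vector_space ((*) :: 'k \<Rightarrow> 'k \<Rightarrow> 'k)" using f by (simp add: linear_iff)
  interpret vp: vector_space_pair sc "(*) :: 'k \<Rightarrow> 'k \<Rightarrow> 'k"
    using vs vsk by (simp add: vector_space_pair_def)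
  obtain T where T: "T \<subseteq> S" "independent T" "S \<subseteq> span T"
    using maximal_independent_subset[of S] by blast
  have finT: "finite T" using T finS finite_subset by blast
  have spT: "span T = UNIV" using T spS by (metis span_eq top_unique span_superset subset_trans span_span span_mono)
  interpret fd: finite_dimensional_vector_space sc T
    by unfold_locales (use finT T spT in auto)
  have F1a: "\<And>x y z. F x (y + z) = F x y + F x z" and F1s: "\<And>x c y. F x (sc c y) = c * F x y"
    using F1 by (auto simp: linear_iff)
  have F2a: "\<And>x y z. F (y + z) x = F y x + F z x" and F2s: "\<And>x c y. F (sc c y) x = c * F y x"
    using F2 by (auto simp: linear_iff)
  have F2d: "\<And>x y z. F (y - z) x = F y x - F z x"
    by (metis F2a add_diff_cancel eq_diff_eq)
  have ie: "\<And>c. (\<Sum>v\<in>T. sc (c v) v) = 0 \<Longrightarrow> (\<forall>v\<in>T. c v = 0)"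
    using fd.independent_explicit[of T] T(2) by blast
  define E where "E x = (\<Sum>b\<in>T. sc (F x b) b)" for x
  have linE: "Vector_Spaces.linear sc sc E"
    unfolding linear_iff E_def
    by (auto simp: vs F2a F2s scale_left_distrib sum.distrib scale_sum_right)
  have injE: "inj E"
  proof (rule injI)
    fix x y assume "E x = E y"
    hence "(\<Sum>b\<in>T. sc (F (x - y) b) b) = 0"
      by (simp add: E_def F2d scale_left_diff_distrib sum_subtractf)
    hence c0: "\<forall>b\<in>T. F (x - y) b = 0" by (rule ie)
    have "\<forall>z. F (x - y) z = 0"
    proof
      fix z
      have "z \<in> span T" using spT by simp
      have l0: "Vector_Spaces.linear sc (*) (\<lambda>_::'v. 0::'k)"
        by (rule vp.linear_zero)
      have "F (x - y) z = (\<lambda>_. 0) z"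
        by (rule vp.linear_eq_on[OF F1 l0 \<open>z \<in> span T\<close>]) (use c0 in auto)
      thus "F (x - y) z = 0" by simp
    qed
    thus "x = y" using nd by fastforce
  qed
  have "surj E" using fd.linear_inj_imp_surj[OF linE injE] .
  then obtain a where a: "E a = (\<Sum>b\<in>T. sc (f b) b)" by (metis surjD)
  hence "(\<Sum>b\<in>T. sc (F a b - f b) b) = 0"
    by (simp add: E_def scale_left_diff_distrib sum_subtractf)
  hence c0: "\<forall>b\<in>T. F a b - f b = 0" by (rule ie)
  show ?thesis
  proof (intro exI allI)
    fix z
    have "z \<in> span T" using spT by simp
    thus "F a z = f z"
      by (rule vp.linear_eq_on[OF F1 f]) (use c0 in auto)
  qed
qed

lemma sum3: "(a::'k::field) + b + c = 0 \<Longrightarrow> a = -b - c"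
proof -
  assume "a + b + c = 0"
  hence "a + (b + c) = 0" by (simp add: add.assoc)
  hence "a = - (b + c)" by (simp only: eq_neg_iff_add_eq_0)
  thus ?thesis by simp
qed

lemma key:
  fixes sc :: "'k::field \<Rightarrow> 'v::ab_group_add \<Rightarrow> 'v"
    and mul :: "'v \<Rightarrow> 'v \<Rightarrow> 'v"
    and B \<omega> :: "'v \<Rightarrow> 'v \<Rightarrow> 'k"
  assumes pe: "pseudo_euclidean sc mul B"
    and bw: "bilin_form sc \<omega>"
  shows "symplectic_form sc mul \<omega> \<longleftrightarrow>
           (\<exists>D. derivation sc mul D \<and> bij D \<and> B_antisymmetric B D
                \<and> (\<forall>x y. \<omega> x y = B (D x) y))"
proof -
  have vs: "vector_space sc" and fin: "\<exists>S. finite S \<and> module.span sc S = UNIV"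
    and comm: "\<And>x y. mul x y = mul y x"
    and bB: "bilin_form sc B" and Bsym: "\<And>x y. B x y = B y x"
    and Bnd: "\<And>x. (\<forall>y. B x y = 0) \<Longrightarrow> x = 0"
    and Bas: "\<And>x y z. B (mul x y) z = B x (mul y z)"
    using pe unfolding pseudo_euclidean_def jordan_algebra_def fd_algebra_def by auto
  obtain S where S: "finite S" "module.span sc S = UNIV" using fin by blast
  have B1: "\<And>x. Vector_Spaces.linear sc (*) (B x)" and B2: "\<And>y. Vector_Spaces.linear sc (*) (\<lambda>x. B x y)"
    using bB unfolding bilin_form_def by auto
  have w1: "\<And>x. Vector_Spaces.linear sc (*) (\<omega> x)" and w2: "\<And>y. Vector_Spaces.linear sc (*) (\<lambda>x. \<omega> x y)"
    using bw unfolding bilin_form_def by auto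
  have vsk: "vector_space ((*) :: 'k \<Rightarrow> 'k \<Rightarrow> 'k)" using B1 by (simp add: linear_iff)
  have Ba: "\<And>x y z. B (y + z) x = B y x + B z x" and Bs: "\<And>x c y. B (sc c y) x = c * B y x"
    using B2 by (auto simp: linear_iff)
  have wa: "\<And>x y z. \<omega> (y + z) x = \<omega> y x + \<omega> z x" and ws: "\<And>x c y. \<omega> (sc c y) x = c * \<omega> y x"
    using w2 by (auto simp: linear_iff)
  have Bd: "\<And>x y z. B (y - z) x = B y x - B z x"
    by (metis Ba add_diff_cancel eq_diff_eq)
  have wd: "\<And>x y z. \<omega> (y - z) x = \<omega> y x - \<omega> z x"
    by (metis wa add_diff_cancel eq_diff_eq)
  have Beq: "\<And>a b. (\<And>z. B a z = B b z) \<Longrightarrow> a = b"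
  proof -
    fix a b assume "\<And>z. B a z = B b z"
    hence "\<forall>z. B (a - b) z = 0" by (simp add: Bd)
    thus "a = b" using Bnd by fastforce
  qed
  show ?thesis
  proof
    assume sy: "symplectic_form sc mul \<omega>"
    have wsk: "\<And>x y. \<omega> x y = - \<omega> y x" and wnd: "\<And>x. (\<forall>y. \<omega> x y = 0) \<Longrightarrow> x = 0"
      and wcy: "\<And>x y z. \<omega> (mul x y) z + \<omega> (mul y z) x + \<omega> (mul z x) y = 0"
      using sy unfolding symplectic_form_def by blast+
    have ex: "\<exists>a. \<forall>y. B a y = \<omega> x y" for x
      by (rule riesz[OF vs S B1 B2 Bnd w1]) auto
    define D where "D x = (SOME a. \<forall>y. B a y = \<omega> x y)" for x
    have DB: "\<And>x y. B (D x) y = \<omega> x y"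
      unfolding D_def using someI_ex[OF ex] by blast
    have linD: "lin_map sc D"
      unfolding lin_map_def linear_iff
    proof (intro conjI allI vs)
      fix x y show "D (x + y) = D x + D y"
        by (rule Beq) (simp add: DB Ba wa)
    next
      fix c x show "D (sc c x) = sc c (D x)"
        by (rule Beq) (simp add: DB Bs ws)
    qed
    have der: "derivation sc mul D"
      unfolding derivation_def
    proof (intro conjI allI linD)
      fix x y show "D (mul x y) = mul (D x) y + mul x (D y)"
      proof (rule Beq)
        fix z
        have "B (D (mul x y)) z = \<omega> (mul x y) z" by (simp add: DB)
        also have "\<dots> = - \<omega> (mul y z) x - \<omega> (mul z x) y"
          using wcy[of x y z] by (rule sum3)
        also have "\<dots> = \<omega> x (mul y z) + \<omega> y (mul z x)"
          using wsk[of "mul y z" x] wsk[of "mul z x" y] by simp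
        also have "\<dots> = B (D x) (mul y z) + B (D y) (mul x z)"
          by (simp add: DB comm)
        also have "\<dots> = B (mul (D x) y) z + B (mul x (D y)) z"
          by (simp only: Bas comm[of x "D y"])
        also have "\<dots> = B (mul (D x) y + mul x (D y)) z" by (simp add: Ba)
        finally show "B (D (mul x y)) z = B (mul (D x) y + mul x (D y)) z" .
      qed
    qed
    have injD: "inj D"
    proof (rule injI)
      fix x y assume "D x = D y"
      hence "\<forall>z. \<omega> (x - y) z = 0"
      proof (intro allI)
        fix z assume h: "D x = D y"
        have "\<omega> (x - y) z = B (D x) z - B (D y) z" by (simp only: wd DB)
        thus "\<omega> (x - y) z = 0" using h by simp
      qed
      thus "x = y" using wnd by fastforce
    qed
    have surjD: "surj D"
    proof -
      { fix y
        have "\<exists>a. \<forall>z. \<omega> a z = B y z"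
          by (rule riesz[OF vs S w1 w2 wnd B1]) auto
        then obtain a where "\<forall>z. \<omega> a z = B y z" by blast
        hence "D a = y" by (intro Beq) (simp add: DB)
        hence "y \<in> range D" by blast }
      thus ?thesis by blast
    qed
    have anti: "B_antisymmetric B D"
      unfolding B_antisymmetric_def
    proof (intro allI)
      fix x y
      have "B (D x) y = \<omega> x y" by (rule DB)
      also have "\<dots> = - \<omega> y x" by (rule wsk)
      also have "\<dots> = - B (D y) x" by (simp add: DB)
      finally show "B (D x) y = - B x (D y)" by (simp add: Bsym)
    qed
    show "\<exists>D. derivation sc mul D \<and> bij D \<and> B_antisymmetric B D \<and> (\<forall>x y. \<omega> x y = B (D x) y)"
      using der injD surjD anti DB unfolding bij_def by auto
  next
    assume "\<exists>D. derivation sc mul D \<and> bij D \<and> B_antisymmetric B D \<and> (\<forall>x y. \<omega> x y = B (D x) y)"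
    then obtain D where der: "derivation sc mul D" and bD: "bij D" and an: "B_antisymmetric B D"
      and wD: "\<And>x y. \<omega> x y = B (D x) y" by blast
    have Dd: "\<And>x y. D (mul x y) = mul (D x) y + mul x (D y)" using der by (simp add: derivation_def)
    have Dl: "\<And>x y. D (x + y) = D x + D y" using der by (simp add: derivation_def lin_map_def linear_iff)
    have D0: "D 0 = 0" using Dl[of 0 0] by simp
    have an': "\<And>x y. B (D x) y = - B x (D y)" using an by (simp add: B_antisymmetric_def)
    show "symplectic_form sc mul \<omega>"
      unfolding symplectic_form_def
    proof (intro conjI allI impI bw)
      fix x y show "\<omega> x y = - \<omega> y x" using an'[of x y] Bsym[of "D y" x] by (simp add: wD)
    next
      fix x assume "\<forall>y. \<omega> x y = 0"
      hence "D x = 0" using Bnd by (simp add: wD)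
      hence "D x = D 0" using D0 by simp
      thus "x = 0" using bD unfolding bij_def inj_def by blast
    next
      fix x y z
      have "\<omega> (mul x y) z = B (mul (D x) y) z + B (mul x (D y)) z" by (simp add: wD Dd Ba)
      moreover have "\<omega> (mul y z) x = - B (mul (D x) y) z"
      proof -
        have "\<omega> (mul y z) x = - B (mul y z) (D x)" by (simp add: wD an')
        also have "\<dots> = - B (D x) (mul y z)" by (simp only: Bsym[of "mul y z"])
        also have "\<dots> = - B (mul (D x) y) z" by (simp only: Bas)
        finally show ?thesis .
      qed
      moreover have "\<omega> (mul z x) y = - B (mul x (D y)) z"
      proof -
        have "\<omega> (mul z x) y = - B (mul z x) (D y)" by (simp add: wD an')
        also have "\<dots> = - B (D y) (mul x z)" by (simp add: Bsym comm)
        also have "\<dots> = - B (mul x (D y)) z" by (simp add: Bas[symmetric] comm)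
        finally show ?thesis .
      qed
      ultimately show "\<omega> (mul x y) z + \<omega> (mul y z) x + \<omega> (mul z x) y = 0" by simp
    qed
  qed
qed


theorem mainTheorem8:
  fixes sc :: "'k::field_char_0 \<Rightarrow> 'v::ab_group_add \<Rightarrow> 'v"
    and mul :: "'v \<Rightarrow> 'v \<Rightarrow> 'v"
    and B \<omega> :: "'v \<Rightarrow> 'v \<Rightarrow> 'k"
  assumes "pseudo_euclidean sc mul B"
    and "bilin_form sc \<omega>"
  shows "(symplectic_form sc mul \<omega> \<longleftrightarrow>
           (\<exists>D. derivation sc mul D \<and> bij D \<and> B_antisymmetric B D
                \<and> (\<forall>x y. \<omega> x y = B (D x) y)))
         \<and> ((\<exists>\<omega>'. symplectic_form sc mul \<omega>') \<longleftrightarrow>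
           (\<exists>D. derivation sc mul D \<and> bij D \<and> B_antisymmetric B D))"
proof (intro conjI iffI)
  show "symplectic_form sc mul \<omega> \<Longrightarrow> \<exists>D. derivation sc mul D \<and> bij D \<and> B_antisymmetric B D \<and> (\<forall>x y. \<omega> x y = B (D x) y)"
    using key[OF assms] by blast
  show "\<exists>D. derivation sc mul D \<and> bij D \<and> B_antisymmetric B D \<and> (\<forall>x y. \<omega> x y = B (D x) y) \<Longrightarrow> symplectic_form sc mul \<omega>"
    using key[OF assms] by blast
next
  assume "\<exists>\<omega>'. symplectic_form sc mul \<omega>'"
  then obtain w where w: "symplectic_form sc mul w" by blast
  hence "bilin_form sc w" by (simp add: symplectic_form_def)
  thus "\<exists>D. derivation sc mul D \<and> bij D \<and> B_antisymmetric B D"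
    using key[OF assms(1)] w by blast
next
  assume "\<exists>D. derivation sc mul D \<and> bij D \<and> B_antisymmetric B D"
  then obtain D where D: "derivation sc mul D" "bij D" "B_antisymmetric B D" by blast
  have bB: "bilin_form sc B" using assms(1) by (simp add: pseudo_euclidean_def)
  have B1: "\<And>x. Vector_Spaces.linear sc (*) (B x)" and B2: "\<And>y. Vector_Spaces.linear sc (*) (\<lambda>x. B x y)"
    using bB unfolding bilin_form_def by auto
  have Dl: "Vector_Spaces.linear sc sc D" using D(1) by (simp add: derivation_def lin_map_def)
  have "bilin_form sc (\<lambda>x y. B (D x) y)"
    unfolding bilin_form_def
  proof (intro conjI allI)
    fix x show "Vector_Spaces.linear sc (*) (B (D x))" by (rule B1)
  next
    fix y show "Vector_Spaces.linear sc (*) (\<lambda>x. B (D x) y)"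
      using Vector_Spaces.linear_compose[OF Dl B2[of y]] by (simp add: o_def)
  qed
  hence "symplectic_form sc mul (\<lambda>x y. B (D x) y)"
    using key[OF assms(1)] D by blast
  thus "\<exists>\<omega>'. symplectic_form sc mul \<omega>'" by blast
qed

end
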